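(* Let $q$ be an odd prime power, and let $n,k,\ell$ be integers with $\ell\ge 0$ and $2\le k\le n-(\ell+1)$ (so $0\le \ell\le n-k-1$). Let $\boldsymbol{\alpha}=(\alpha_1,\dots,\alpha_n)\in\mathbb{F}_q^n$ with pairwise distinct entries, $\boldsymbol{v}=(v_1,\dots,v_n)\in(\mathbb{F}_q^{*})^n$, and $\boldsymbol{\eta}=(\eta_0,\dots,\eta_\ell)\in\mathbb{F}_q^{\ell+1}\setminus\{\boldsymbol 0\}$. Let $\mathcal{C}$ be the $( * )$-$(\mathcal{L},\mathcal{P})$-TGRS code defined in the context. Then the $(n-k)\times n$ matrix $\boldsymbol{H}$ whose $j$-th column ($1\le j\le n$) is $$\frac{u_j}{v_j}\Big(1,\ \alpha_j,\ \dots,\ \alpha_j^{\,n-k-(\ell+2)},\ \alpha_j^{\,n-k-(\ell+1)}-(-1)^{n-1}P_j\Omega_{\ell+1},\ \alpha_j^{\,n-k-\ell}-(-1)^{n-1}P_j\Omega_{\ell},\ \dots,\ \alpha_j^{\,n-k-1}-(-1)^{n-1}P_j\Omega_{1}\Big)^{T}$$ (i.e. rows $0,\dots,n-k-(\ell+2)$ are $(\frac{u_j}{v_j}\alpha_j^{i})_j$, and for $1\le r\le \ell+1$ the row indexed $n-k-r$ is $\big(\frac{u_j}{v_j}(\alpha_j^{\,n-k-r}-(-1)^{n-1}P_j\Omega_r)\big)_j$) is a parity-check matrix of $\mathcal{C}$; that is, $\operatorname{rank}\boldsymbol{H}=n-k$ and $\boldsymbol{G}\boldsymbol{H}^{T}=\boldsymbol{0}$,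 where $\boldsymbol{G}$ is the generator matrix of $\mathcal{C}$ given in the context. Here $$\Omega_r=\sum_{t=0}^{\ell}\eta_t\,S_{t+1-r}(\alpha_1,\dots,\alpha_n),\qquad 1\le r\le \ell+1.$$
   Context: $P_j=\prod_{i=1,i\neq j}^{n}\alpha_i$ and $P=\prod_{i=1}^n\alpha_i$; $u_j=\prod_{i=1,i\neq j}^{n}(\alpha_j-\alpha_i)^{-1}$ for $1\le j\le n$. For an integer $t$, $S_t(x_1,\dots,x_n)$ is the complete homogeneous symmetric polynomial of degree $t$: $S_t=0$ if $t<0$, and $S_t=\sum_{t_1+\dots+t_n=t,\ t_i\ge0}x_1^{t_1}\cdots x_n^{t_n}$ if $t\ge0$ (so $S_0=1$). The $( * )$-$(\mathcal{L},\mathcal{P})$-TGRS code is $\mathcal{C}=\{(v_1f(\alpha_1),\dots,v_nf(\alpha_n)) : f\in\mathcal{F}_{n,k,\boldsymbol\eta}\}$, where $\mathcal{F}_{n,k,\boldsymbol\eta}=\{\sum_{i=0}^{k-1}f_ix^i+f_0\sum_{j=0}^{\ell}\eta_jx^{k+j} : f_i\in\mathbb{F}_q\}$. Its generator matrix is the $k\times n$ matrix $\boldsymbol G$ whose first row is $\big(v_j(1+\sum_{t=0}^{\ell}\eta_t\alpha_j^{k+t})\big)_{j=1}^n$ and whose row $i$ ($1\le i\le k-1$) is $(v_j\alpha_j^{i})_{j=1}^n$. A parity-check matrix of a linear $[n,k]$ code is a full-rank $(n-k)\times n$ matrix whose null space is the code. *)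

theory Defs
  imports "Jordan_Normal_Form.DL_Rank_Submatrix"
begin

text \<open>Vectors of length n are functions on nat, indexed 0..n-1
  (entry i corresponds to the paper's index i+1).\<close>

definition complete_hom :: "int \<Rightarrow> nat \<Rightarrow> (nat \<Rightarrow> 'a::comm_ring_1) \<Rightarrow> 'a" where
  "complete_hom t n x =
     (if t < 0 then 0
      else \<Sum>e\<in>{e. e \<in> {0..<n} \<rightarrow>\<^sub>E {0..nat t} \<and> (\<Sum>i<n. e i) = nat t}.
             \<Prod>i<n. x i ^ e i)"

definition Pj :: "nat \<Rightarrow> (nat \<Rightarrow> 'a::field) \<Rightarrow> nat \<Rightarrow> 'a" where
  "Pj n \<alpha> j = (\<Prod>i\<in>{0..<n} - {j}. \<alpha> i)"

definition uj :: "nat \<Rightarrow> (nat \<Rightarrow> 'a::field) \<Rightarrow> nat \<Rightarrow> 'a" where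
  "uj n \<alpha> j = (\<Prod>i\<in>{0..<n} - {j}. inverse (\<alpha> j - \<alpha> i))"

definition Omega :: "nat \<Rightarrow> nat \<Rightarrow> (nat \<Rightarrow> 'a::field) \<Rightarrow> (nat \<Rightarrow> 'a) \<Rightarrow> nat \<Rightarrow> 'a" where
  "Omega n l \<alpha> \<eta> r = (\<Sum>t=0..l. \<eta> t * complete_hom (int t + 1 - int r) n \<alpha>)"

definition tgrs_G :: "nat \<Rightarrow> nat \<Rightarrow> nat \<Rightarrow> (nat \<Rightarrow> 'a::field) \<Rightarrow> (nat \<Rightarrow> 'a) \<Rightarrow> (nat \<Rightarrow> 'a) \<Rightarrow> 'a mat" where
  "tgrs_G n k l \<alpha> v \<eta> = mat k n (\<lambda>(i, j).
     if i = 0 then v j * (1 + (\<Sum>t=0..l. \<eta> t * \<alpha> j ^ (k + t)))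
     else v j * \<alpha> j ^ i)"

definition tgrs_H :: "nat \<Rightarrow> nat \<Rightarrow> nat \<Rightarrow> (nat \<Rightarrow> 'a::field) \<Rightarrow> (nat \<Rightarrow> 'a) \<Rightarrow> (nat \<Rightarrow> 'a) \<Rightarrow> 'a mat" where
  "tgrs_H n k l \<alpha> v \<eta> = mat (n - k) n (\<lambda>(i, j).
     uj n \<alpha> j / v j *
     (if i < n - k - (l + 1) then \<alpha> j ^ i
      else \<alpha> j ^ i - (-1) ^ (n - 1) * Pj n \<alpha> j * Omega n l \<alpha> \<eta> (n - k - i)))"

end

theory Submission
  imports Defs
begin


definition uu :: "nat set \<Rightarrow> (nat \<Rightarrow> 'a::field) \<Rightarrow> nat \<Rightarrow> 'a" where
  "uu A \<alpha> j = (\<Prod>i\<in>A-{j}. inverse (\<alpha> j - \<alpha> i))"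

definition DD :: "nat set \<Rightarrow> (nat \<Rightarrow> 'a::field) \<Rightarrow> nat \<Rightarrow> 'a" where
  "DD A \<alpha> m = (\<Sum>j\<in>A. \<alpha> j ^ m * uu A \<alpha> j)"

lemma uu_remove:
  assumes "finite A" "p \<in> A" "j \<in> A" "j \<noteq> p"
  shows "uu A \<alpha> j = uu (A-{p}) \<alpha> j * inverse (\<alpha> j - \<alpha> p)"
proof -
  have "A - {j} = insert p ((A-{p})-{j})" using assms by auto
  then show ?thesis unfolding uu_def using assms by (simp add: prod.insert mult.commute)
qed

lemma DD_step:
  assumes "finite A" "p \<in> A" "inj_on \<alpha> A"
  shows "DD A \<alpha> (Suc m) = DD (A-{p}) \<alpha> m + \<alpha> p * DD A \<alpha> m"
proof -
  have "DD A \<alpha> (Suc m) - \<alpha> p * DD A \<alpha> m = (\<Sum>j\<in>A. \<alpha> j ^ m * (\<alpha> j - \<alpha> p) * uu A \<alpha> j)"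
    unfolding DD_def by (simp add: sum_distrib_left sum_subtractf[symmetric] algebra_simps)
  also have "\<dots> = (\<Sum>j\<in>A-{p}. \<alpha> j ^ m * (\<alpha> j - \<alpha> p) * uu A \<alpha> j)"
    using assms by (simp add: sum.remove)
  also have "\<dots> = (\<Sum>j\<in>A-{p}. \<alpha> j ^ m * uu (A-{p}) \<alpha> j)"
  proof (rule sum.cong)
    fix j assume j: "j \<in> A - {p}"
    then have "\<alpha> j \<noteq> \<alpha> p" using assms inj_onD by fastforce
    then show "\<alpha> j ^ m * (\<alpha> j - \<alpha> p) * uu A \<alpha> j = \<alpha> j ^ m * uu (A-{p}) \<alpha> j"
    proof -
      have "(\<alpha> j - \<alpha> p) * uu A \<alpha> j = uu (A-{p}) \<alpha> j"
        using uu_remove[OF assms(1,2), of j \<alpha>] j \<open>\<alpha> j \<noteq> \<alpha> p\<close> by simp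
      then show ?thesis by (metis mult.assoc)
    qed
  qed simp
  finally show ?thesis unfolding DD_def by (simp add: algebra_simps)
qed

lemma DD_low:
  "finite A \<Longrightarrow> card A = Suc N \<Longrightarrow> inj_on \<alpha> A \<Longrightarrow> m \<le> N \<Longrightarrow> DD A \<alpha> m = (if m = N then 1 else 0)"
proof (induction N arbitrary: A m)
  case 0
  then obtain a where "A = {a}" by (auto simp: card_Suc_eq)
  then show ?case using 0 by (simp add: DD_def uu_def)
next
  case (Suc N)
  obtain p B where pB: "A = insert p B" "p \<notin> B" "card B = Suc N" using Suc.prems(2) card_Suc_eq by metis
  then obtain q where q: "q \<in> B" by fastforce
  have pA: "p \<in> A" and qA: "q \<in> A" and pq: "p \<noteq> q" using pB q by auto
  have apq: "\<alpha> p \<noteq> \<alpha> q" using Suc.prems(3) pA qA pq inj_onD by fastforce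
  have cp: "card (A-{p}) = Suc N" and cq: "card (A-{q}) = Suc N" using Suc.prems(1,2) pA qA by auto
  have ip: "inj_on \<alpha> (A-{p})" and iq: "inj_on \<alpha> (A-{q})" using Suc.prems(3) by (auto intro: inj_on_subset)
  have fp: "finite (A-{p})" and fq: "finite (A-{q})" using Suc.prems(1) by auto
  have low: "DD A \<alpha> m = 0" if "m \<le> N" for m
  proof -
    have "DD (A-{p}) \<alpha> m = DD (A-{q}) \<alpha> m"
      using Suc.IH[OF fp cp ip that] Suc.IH[OF fq cq iq that] by simp
    moreover have "DD A \<alpha> (Suc m) = DD (A-{p}) \<alpha> m + \<alpha> p * DD A \<alpha> m"
      "DD A \<alpha> (Suc m) = DD (A-{q}) \<alpha> m + \<alpha> q * DD A \<alpha> m"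
      using DD_step[OF Suc.prems(1) pA Suc.prems(3)] DD_step[OF Suc.prems(1) qA Suc.prems(3)] by auto
    ultimately have "\<alpha> p * DD A \<alpha> m = \<alpha> q * DD A \<alpha> m" by (metis add_left_cancel)
    then have "(\<alpha> p - \<alpha> q) * DD A \<alpha> m = 0" by (simp add: algebra_simps)
    then show ?thesis using apq by auto
  qed
  show ?case
  proof (cases "m = Suc N")
    case True
    have "DD A \<alpha> (Suc N) = DD (A-{p}) \<alpha> N + \<alpha> p * DD A \<alpha> N"
      using DD_step[OF Suc.prems(1) pA Suc.prems(3)] by auto
    then show ?thesis using True low[of N] Suc.IH[OF fp cp ip, of N] by simp
  next
    case False
    then show ?thesis using low Suc.prems(4) by simp
  qed
qed



definition PP :: "nat set \<Rightarrow> (nat \<Rightarrow> 'a::field) \<Rightarrow> nat \<Rightarrow> 'a" where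
  "PP A \<alpha> j = (\<Prod>i\<in>A-{j}. \<alpha> i)"

lemma TT:
  "finite A \<Longrightarrow> card A = Suc N \<Longrightarrow> inj_on \<alpha> A \<Longrightarrow>
   (\<Sum>j\<in>A. uu A \<alpha> j * PP A \<alpha> j) = (-1) ^ N"
proof (induction N arbitrary: A)
  case 0
  then obtain a where "A = {a}" by (auto simp: card_Suc_eq)
  then show ?case by (simp add: uu_def PP_def)
next
  case (Suc N)
  obtain p B where pB: "A = insert p B" "p \<notin> B" "card B = Suc N" using Suc.prems(2) card_Suc_eq by metis
  have pA: "p \<in> A" using pB by auto
  have cp: "card (A-{p}) = Suc N" using Suc.prems(1,2) pA by auto
  have ip: "inj_on \<alpha> (A-{p})" using Suc.prems(3) by (auto intro: inj_on_subset)
  have fp: "finite (A-{p})" using Suc.prems(1) by auto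
  have D0: "DD A \<alpha> 0 = 0" using DD_low[OF Suc.prems(1,2,3), of 0] by simp
  have eq: "uu A \<alpha> j * PP A \<alpha> j = uu A \<alpha> j * PP A \<alpha> p - uu (A-{p}) \<alpha> j * PP (A-{p}) \<alpha> j"
    if j: "j \<in> A - {p}" for j
  proof -
    have ne: "\<alpha> j \<noteq> \<alpha> p" using j pA Suc.prems(3) inj_onD by fastforce
    have u: "uu A \<alpha> j = uu (A-{p}) \<alpha> j * inverse (\<alpha> j - \<alpha> p)"
      using uu_remove[OF Suc.prems(1) pA, of j] j by auto
    have P1: "PP A \<alpha> j = \<alpha> p * PP (A-{p}) \<alpha> j"
    proof -
      have "A - {j} = insert p ((A-{p})-{j})" using j pA by auto
      then show ?thesis unfolding PP_def using Suc.prems(1) by simp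
    qed
    have P2: "PP A \<alpha> p = \<alpha> j * PP (A-{p}) \<alpha> j"
      unfolding PP_def using Suc.prems(1) j by (simp add: prod.remove)
    show ?thesis unfolding u P1 P2 using ne by (simp add: field_simps)
  qed
  have "(\<Sum>j\<in>A. uu A \<alpha> j * PP A \<alpha> j) = uu A \<alpha> p * PP A \<alpha> p + (\<Sum>j\<in>A-{p}. uu A \<alpha> j * PP A \<alpha> j)"
    using Suc.prems(1) pA by (simp add: sum.remove)
  also have "(\<Sum>j\<in>A-{p}. uu A \<alpha> j * PP A \<alpha> j)
      = (\<Sum>j\<in>A-{p}. uu A \<alpha> j) * PP A \<alpha> p - (\<Sum>j\<in>A-{p}. uu (A-{p}) \<alpha> j * PP (A-{p}) \<alpha> j)"
    by (simp add: eq sum_subtractf sum_distrib_right)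
  also have "(\<Sum>j\<in>A-{p}. uu A \<alpha> j) = DD A \<alpha> 0 - uu A \<alpha> p"
    unfolding DD_def using Suc.prems(1) pA by (simp add: sum.remove)
  finally show ?case using D0 Suc.IH[OF fp cp ip] by simp
qed

definition EE :: "nat \<Rightarrow> nat \<Rightarrow> (nat \<Rightarrow> nat) set" where
  "EE n s = {e. e \<in> {0..<n} \<rightarrow>\<^sub>E {0..s} \<and> (\<Sum>i<n. e i) = s}"

lemma ch_nat: "complete_hom (int s) n x = (\<Sum>e\<in>EE n s. \<Prod>i<n. x i ^ e i)"
  unfolding complete_hom_def EE_def by simp

lemma EE_finite: "finite (EE n s)"
  unfolding EE_def by (rule finite_subset[of _ "{0..<n} \<rightarrow>\<^sub>E {0..s}"]) (auto intro: finite_PiE)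

lemma ch_zero_vars: "complete_hom (int s) 0 x = (if s = 0 then 1 else 0)"
  unfolding ch_nat EE_def by (auto simp: PiE_empty_domain)

lemma ch_Suc:
  "complete_hom (int s) (Suc n) x = (\<Sum>a=0..s. x n ^ a * complete_hom (int (s-a)) n x)"
proof -
  let ?T = "SIGMA a:{0..s}. EE n (s-a)"
  have "(\<Sum>e\<in>EE (Suc n) s. \<Prod>i<Suc n. x i ^ e i) = (\<Sum>(a,e')\<in>?T. x n ^ a * (\<Prod>i<n. x i ^ e' i))"
  proof (rule sum.reindex_bij_witness[where j = "\<lambda>e. (e n, e(n:=undefined))" and i = "\<lambda>(a,e'). e'(n:=a)"])
    fix e assume e: "e \<in> EE (Suc n) s"
    show "(case (e n, e(n := undefined)) of (a, e') \<Rightarrow> e'(n := a)) = e" by simp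
    have en: "e n \<le> s" using e unfolding EE_def by auto
    have sum: "(\<Sum>i<n. e i) + e n = s" using e unfolding EE_def by simp
    have le: "e i \<le> s - e n" if "i < n" for i
    proof -
      have "e i \<le> (\<Sum>i<n. e i)" using that by (intro member_le_sum) auto
      then show ?thesis using sum by simp
    qed
    have "(e(n := undefined)) \<in> {0..<n} \<rightarrow>\<^sub>E {0..s - e n}"
      using e le unfolding EE_def PiE_def extensional_def by (auto simp: Pi_def)
    moreover have "(\<Sum>i<n. (e(n := undefined)) i) = s - e n" using sum by simp
    ultimately show "(e n, e(n := undefined)) \<in> ?T" using en unfolding EE_def by auto
    show "(case (e n, e(n := undefined)) of (a, e') \<Rightarrow> x n ^ a * (\<Prod>i<n. x i ^ e' i)) = (\<Prod>i<Suc n. x i ^ e i)"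
      by (simp add: mult.commute)
  next
    fix b assume b: "b \<in> ?T"
    obtain a e' where ae: "b = (a, e')" by fastforce
    have a: "a \<le> s" and e': "e' \<in> EE n (s - a)" using b ae by auto
    have ext: "e' n = undefined" using e' unfolding EE_def PiE_def extensional_def by auto
    show "(case (case b of (a, e') \<Rightarrow> e'(n := a)) of e \<Rightarrow> (e n, e(n := undefined))) = b"
      using ae ext by auto
    have "(\<Sum>i<Suc n. (e'(n := a)) i) = s" using e' a unfolding EE_def by simp
    moreover have "e'(n := a) \<in> {0..<Suc n} \<rightarrow>\<^sub>E {0..s}"
      using e' a unfolding EE_def PiE_def extensional_def by (auto simp: Pi_def less_Suc_eq)
    ultimately show "(case b of (a, e') \<Rightarrow> e'(n := a)) \<in> EE (Suc n) s" using ae unfolding EE_def by auto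
  qed
  also have "\<dots> = (\<Sum>a=0..s. \<Sum>e'\<in>EE n (s-a). x n ^ a * (\<Prod>i<n. x i ^ e' i))"
    by (rule sum.Sigma[symmetric]) (auto simp: EE_finite)
  finally show ?thesis unfolding ch_nat by (simp add: sum_distrib_left)
qed

lemma ch_zero: "complete_hom 0 n x = 1"
proof (induction n)
  case 0 then show ?case using ch_zero_vars[of 0] by simp
next
  case (Suc n) then show ?case using ch_Suc[of 0 n x] by simp
qed



lemma DD_rec:
  assumes inj: "inj_on \<alpha> {0..<Suc n}"
  shows "DD {0..<Suc n} \<alpha> (n+s) = (\<Sum>a<s. \<alpha> n ^ a * DD {0..<n} \<alpha> (n+s-1-a)) + \<alpha> n ^ s * DD {0..<Suc n} \<alpha> n"
proof (induction s)
  case 0 then show ?case by simp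
next
  case (Suc s)
  have A: "{0..<Suc n} - {n} = {0..<n}" by auto
  have "DD {0..<Suc n} \<alpha> (n + Suc s) = DD {0..<n} \<alpha> (n+s) + \<alpha> n * DD {0..<Suc n} \<alpha> (n+s)"
    using DD_step[OF _ _ inj, of n "n+s"] A by simp
  also have "\<dots> = DD {0..<n} \<alpha> (n+s) + (\<Sum>a<s. \<alpha> n ^ Suc a * DD {0..<n} \<alpha> (n+s-1-a)) + \<alpha> n ^ Suc s * DD {0..<Suc n} \<alpha> n"
    unfolding Suc.IH by (simp add: algebra_simps sum_distrib_left)
  also have "DD {0..<n} \<alpha> (n+s) + (\<Sum>a<s. \<alpha> n ^ Suc a * DD {0..<n} \<alpha> (n+s-1-a))
      = (\<Sum>a<Suc s. \<alpha> n ^ a * DD {0..<n} \<alpha> (n + Suc s - 1 - a))"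
    by (simp only: sum.lessThan_Suc_shift) simp
  finally show ?case .
qed

lemma DD_ch_step:
  assumes inj: "inj_on \<alpha> {0..<Suc n}"
    and inner: "\<And>a. a < s \<Longrightarrow> DD {0..<n} \<alpha> (n+s-1-a) = complete_hom (int (s-a)) n \<alpha>"
  shows "DD {0..<Suc n} \<alpha> (n+s) = complete_hom (int s) (Suc n) \<alpha>"
proof -
  have D1: "DD {0..<Suc n} \<alpha> n = 1" using DD_low[OF _ _ inj, of n n] by simp
  have "complete_hom (int s) (Suc n) \<alpha> = (\<Sum>a<Suc s. \<alpha> n ^ a * complete_hom (int (s-a)) n \<alpha>)"
    unfolding ch_Suc by (simp add: atLeast0AtMost lessThan_Suc_atMost)
  also have "\<dots> = (\<Sum>a<s. \<alpha> n ^ a * complete_hom (int (s-a)) n \<alpha>) + \<alpha> n ^ s"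
    using ch_zero[of n \<alpha>] by simp
  also have "\<dots> = DD {0..<Suc n} \<alpha> (n+s)"
    unfolding DD_rec[OF inj] D1 using inner by simp
  finally show ?thesis by simp
qed

lemma DD_ch:
  "inj_on \<alpha> {0..<Suc n} \<Longrightarrow> DD {0..<Suc n} \<alpha> (n+s) = complete_hom (int s) (Suc n) \<alpha>"
proof (induction n arbitrary: s)
  case 0
  show ?case
  proof (rule DD_ch_step[OF 0])
    fix a assume "a < s"
    then show "DD {0..<0} \<alpha> (0 + s - 1 - a) = complete_hom (int (s - a)) 0 \<alpha>"
      using ch_zero_vars[of "s-a" \<alpha>] by (simp add: DD_def)
  qed
next
  case (Suc n)
  have inj': "inj_on \<alpha> {0..<Suc n}" using Suc.prems by (rule inj_on_subset) auto
  show ?case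
  proof (rule DD_ch_step[OF Suc.prems])
    fix a assume "a < s"
    then have "Suc n + s - 1 - a = n + (s-a)" by simp
    then show "DD {0..<Suc n} \<alpha> (Suc n + s - 1 - a) = complete_hom (int (s - a)) (Suc n) \<alpha>"
      using Suc.IH[OF inj'] by simp
  qed
qed



lemma (in vec_space) rank_right_inv:
  assumes A: "A \<in> carrier_mat n nc" and C: "C \<in> carrier_mat nc n" and d: "det (A * C) \<noteq> 0"
  shows "rank A = n"
proof -
  have AC: "A * C \<in> carrier_mat n n" using A C by simp
  from det_non_zero_imp_unit[OF AC d, of n]
  obtain D where D: "D \<in> carrier_mat n n" "(A * C) * D = 1\<^sub>m n"
    unfolding Units_def ring_mat_def by auto
  have cA: "set (cols A) \<subseteq> carrier_vec n" using A cols_dim by blast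
  have mv: "A *\<^sub>v x \<in> span (set (cols A))" if x: "x \<in> carrier_vec nc" for x
  proof -
    have "lincomb_list (\<lambda>i. x $ i) (cols A) = mat_of_cols n (cols A) *\<^sub>v vec (length (cols A)) (\<lambda>i. x $ i)"
      by (rule lincomb_list_as_mat_mult) (use cA in auto)
    also have "\<dots> = A *\<^sub>v x"
    proof -
      have "mat_of_cols n (cols A) = A" using A mat_of_cols_cols[of A] by simp
      moreover have "vec (length (cols A)) (\<lambda>i. x $ i) = x" using A x by (auto intro!: eq_vecI)
      ultimately show ?thesis by simp
    qed
    finally have "A *\<^sub>v x \<in> span_list (cols A)" by (intro in_span_listI[where c="\<lambda>i. x $ i"]) auto
    then show ?thesis using span_list_as_span[OF cA] by simp
  qed
  have "span (set (cols A)) = carrier_vec n"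
  proof
    show "span (set (cols A)) \<subseteq> carrier_vec n" using span_closed[OF cA] by auto
    show "carrier_vec n \<subseteq> span (set (cols A))"
    proof
      fix y :: "'a vec" assume y: "y \<in> carrier_vec n"
      have "y = ((A * C) * D) *\<^sub>v y" using D y by simp
      also have "\<dots> = (A * C) *\<^sub>v (D *\<^sub>v y)"
        by (rule assoc_mult_mat_vec) (use AC D y in auto)
      also have "\<dots> = A *\<^sub>v (C *\<^sub>v (D *\<^sub>v y))"
        by (rule assoc_mult_mat_vec) (use A C D y in auto)
      moreover have "C *\<^sub>v (D *\<^sub>v y) \<in> carrier_vec nc" using C D y by simp
      ultimately show "y \<in> span (set (cols A))" using mv by metis
    qed
  qed
  then have "rank A = vectorspace.dim class_ring (vs (carrier_vec n))" unfolding rank_def by simp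
  also have "vs (carrier_vec n) = V" using carrier_vs_is_self by simp
  finally show ?thesis using dim_is_n by simp
qed



lemma sum_facts:
  fixes \<alpha> :: "nat \<Rightarrow> 'a::field"
  assumes inj: "inj_on \<alpha> {0..<n}" and n: "2 \<le> n"
  shows F1: "\<And>m. m \<le> n - 2 \<Longrightarrow> (\<Sum>j=0..<n. \<alpha> j ^ m * uj n \<alpha> j) = 0"
    and F1': "(\<Sum>j=0..<n. \<alpha> j ^ (n-1) * uj n \<alpha> j) = 1"
    and F2: "\<And>m. 1 \<le> m \<Longrightarrow> m \<le> n - 1 \<Longrightarrow> (\<Sum>j=0..<n. \<alpha> j ^ m * Pj n \<alpha> j * uj n \<alpha> j) = 0"
    and F3: "(\<Sum>j=0..<n. uj n \<alpha> j * Pj n \<alpha> j) = (-1) ^ (n-1)"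
    and F4: "\<And>t r. 1 \<le> r \<Longrightarrow> r \<le> n \<Longrightarrow>
        (\<Sum>j=0..<n. \<alpha> j ^ (n + t - r) * uj n \<alpha> j) = complete_hom (int t + 1 - int r) n \<alpha>"
proof -
  have c: "card {0..<n} = Suc (n-1)" using n by simp
  have D: "DD {0..<n} \<alpha> m = (\<Sum>j=0..<n. \<alpha> j ^ m * uj n \<alpha> j)" for m
    by (simp add: DD_def uu_def uj_def)
  show F1: "(\<Sum>j=0..<n. \<alpha> j ^ m * uj n \<alpha> j) = 0" if "m \<le> n - 2" for m
    using DD_low[OF _ c inj, of m] that n unfolding D by simp
  show "(\<Sum>j=0..<n. \<alpha> j ^ (n-1) * uj n \<alpha> j) = 1"
    using DD_low[OF _ c inj, of "n-1"] unfolding D by simp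
  show "(\<Sum>j=0..<n. \<alpha> j ^ m * Pj n \<alpha> j * uj n \<alpha> j) = 0" if m: "1 \<le> m" "m \<le> n - 1" for m
  proof -
    have "(\<Sum>j=0..<n. \<alpha> j ^ m * Pj n \<alpha> j * uj n \<alpha> j)
        = (\<Sum>j=0..<n. (\<Prod>i=0..<n. \<alpha> i) * (\<alpha> j ^ (m-1) * uj n \<alpha> j))"
    proof (rule sum.cong)
      fix j assume j: "j \<in> {0..<n}"
      have "(\<Prod>i=0..<n. \<alpha> i) = \<alpha> j * Pj n \<alpha> j" unfolding Pj_def using j by (simp add: prod.remove)
      moreover have "\<alpha> j ^ m = \<alpha> j * \<alpha> j ^ (m-1)" using m by (cases m) auto
      ultimately show "\<alpha> j ^ m * Pj n \<alpha> j * uj n \<alpha> j = (\<Prod>i=0..<n. \<alpha> i) * (\<alpha> j ^ (m-1) * uj n \<alpha> j)"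
        by simp
    qed simp
    also have "\<dots> = 0" unfolding sum_distrib_left[symmetric] using F1[of "m-1"] m by simp
    finally show ?thesis .
  qed
  show "(\<Sum>j=0..<n. uj n \<alpha> j * Pj n \<alpha> j) = (-1) ^ (n-1)"
    using TT[OF _ c inj] by (simp add: uu_def uj_def PP_def Pj_def)
  show "(\<Sum>j=0..<n. \<alpha> j ^ (n + t - r) * uj n \<alpha> j) = complete_hom (int t + 1 - int r) n \<alpha>"
    if r: "1 \<le> r" "r \<le> n" for t r
  proof (cases "r \<le> t + 1")
    case True
    define s where "s = t + 1 - r"
    have e1: "n + t - r = (n-1) + s" using True r n unfolding s_def by simp
    have e2: "int t + 1 - int r = int s" using True unfolding s_def by simp
    have inj': "inj_on \<alpha> {0..<Suc (n-1)}" using inj n by simp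
    show ?thesis unfolding e1 e2 D[symmetric] using DD_ch[OF inj', of s] n by simp
  next
    case False
    then have "n + t - r \<le> n - 2" using r by simp
    then show ?thesis using F1 False by (simp add: complete_hom_def)
  qed
qed



theorem theorem3p1:
  fixes n k l :: nat
    and \<alpha> v \<eta> :: "nat \<Rightarrow> 'a::{finite, field}"
  assumes q_odd: "odd (card (UNIV :: 'a set))"
    and k_ge: "2 \<le> k"
    and k_le: "k \<le> n - (l + 1)"
    and l_le: "l + 1 \<le> n"
    and \<alpha>_distinct: "inj_on \<alpha> {0..<n}"
    and v_nz: "\<forall>j<n. v j \<noteq> 0"
    and \<eta>_nz: "\<exists>t\<le>l. \<eta> t \<noteq> 0"
  shows "vec_space.rank (n - k) (tgrs_H n k l \<alpha> v \<eta>) = n - k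
       \<and> tgrs_G n k l \<alpha> v \<eta> * (tgrs_H n k l \<alpha> v \<eta>)\<^sup>T = 0\<^sub>m k (n - k)"
proof -
  define N where "N = n - k"
  define c :: 'a where "c = (-1) ^ (n-1)"
  define W where "W i = (if i < N - (l+1) then 0 else Omega n l \<alpha> \<eta> (N - i))" for i
  define gp where "gp i j = (if i = 0 then 1 + (\<Sum>t=0..l. \<eta> t * \<alpha> j ^ (k + t)) else \<alpha> j ^ i)" for i j
  define H where "H = tgrs_H n k l \<alpha> v \<eta>"
  define G where "G = tgrs_G n k l \<alpha> v \<eta>"
  have n3: "3 \<le> n" and kN: "k + l + 1 \<le> n" using k_ge k_le l_le by auto
  have cc: "c * c = 1" unfolding c_def by (simp add: power_mult_distrib[symmetric])
  note SF = sum_facts[OF \<alpha>_distinct, of ] 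
  have F1: "\<And>m. m \<le> n - 2 \<Longrightarrow> (\<Sum>j=0..<n. \<alpha> j ^ m * uj n \<alpha> j) = 0"
    and F1': "(\<Sum>j=0..<n. \<alpha> j ^ (n-1) * uj n \<alpha> j) = 1"
    and F2: "\<And>m. 1 \<le> m \<Longrightarrow> m \<le> n - 1 \<Longrightarrow> (\<Sum>j=0..<n. \<alpha> j ^ m * Pj n \<alpha> j * uj n \<alpha> j) = 0"
    and F3: "(\<Sum>j=0..<n. uj n \<alpha> j * Pj n \<alpha> j) = c"
    and F4: "\<And>t r. 1 \<le> r \<Longrightarrow> r \<le> n \<Longrightarrow>
        (\<Sum>j=0..<n. \<alpha> j ^ (n + t - r) * uj n \<alpha> j) = complete_hom (int t + 1 - int r) n \<alpha>"
    using sum_facts[OF \<alpha>_distinct] n3 unfolding c_def by auto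
  have Hc: "H \<in> carrier_mat N n" unfolding H_def tgrs_H_def N_def by simp
  have Gc: "G \<in> carrier_mat k n" unfolding G_def tgrs_G_def by simp
  have Hij: "H $$ (i,j) = uj n \<alpha> j / v j * (\<alpha> j ^ i - c * Pj n \<alpha> j * W i)" if "i < N" "j < n" for i j
    using that unfolding H_def tgrs_H_def W_def c_def N_def by auto
  have Gij: "G $$ (i,j) = v j * gp i j" if "i < k" "j < n" for i j
    using that unfolding G_def tgrs_G_def gp_def by auto

  have key: "(\<Sum>j=0..<n. uj n \<alpha> j * gp i j * (\<alpha> j ^ i' - c * Pj n \<alpha> j * W i')) = 0"
    if i: "i < k" and i': "i' < N" for i i'
  proof (cases "i = 0")
    case False
    have "(\<Sum>j=0..<n. uj n \<alpha> j * gp i j * (\<alpha> j ^ i' - c * Pj n \<alpha> j * W i'))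
       = (\<Sum>j=0..<n. \<alpha> j ^ (i+i') * uj n \<alpha> j) - c * W i' * (\<Sum>j=0..<n. \<alpha> j ^ i * Pj n \<alpha> j * uj n \<alpha> j)"
      unfolding gp_def using False
      by (simp add: sum_subtractf sum_distrib_left algebra_simps power_add)
    also have "\<dots> = 0" using F1[of "i+i'"] F2[of i] False i i' unfolding N_def by simp
    finally show ?thesis .
  next
    case True
    have pw: "uj n \<alpha> j * gp i j * (\<alpha> j ^ i' - c * Pj n \<alpha> j * W i')
       = \<alpha> j ^ i' * uj n \<alpha> j + (\<Sum>t=0..l. \<eta> t * (\<alpha> j ^ (k+t+i') * uj n \<alpha> j))
         - c * W i' * (uj n \<alpha> j * Pj n \<alpha> j)
         - c * W i' * (\<Sum>t=0..l. \<eta> t * (\<alpha> j ^ (k+t) * Pj n \<alpha> j * uj n \<alpha> j))" for j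
    proof -
      define S where "S = (\<Sum>t=0..l. \<eta> t * \<alpha> j ^ (k + t))"
      have g: "gp i j = 1 + S" unfolding gp_def S_def using True by simp
      have s1: "S * (\<alpha> j ^ i' * uj n \<alpha> j) = (\<Sum>t=0..l. \<eta> t * (\<alpha> j ^ (k+t+i') * uj n \<alpha> j))"
        unfolding S_def sum_distrib_right by (rule sum.cong) (simp_all add: power_add algebra_simps)
      have s2: "S * (Pj n \<alpha> j * uj n \<alpha> j) = (\<Sum>t=0..l. \<eta> t * (\<alpha> j ^ (k+t) * Pj n \<alpha> j * uj n \<alpha> j))"
        unfolding S_def sum_distrib_right by (rule sum.cong) (simp_all add: algebra_simps)
      have "uj n \<alpha> j * (1 + S) * (\<alpha> j ^ i' - c * Pj n \<alpha> j * W i')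
         = \<alpha> j ^ i' * uj n \<alpha> j + S * (\<alpha> j ^ i' * uj n \<alpha> j) - c * W i' * (uj n \<alpha> j * Pj n \<alpha> j)
           - c * W i' * (S * (Pj n \<alpha> j * uj n \<alpha> j))"
        by (simp add: algebra_simps)
      then show ?thesis unfolding g s1 s2 .
    qed
    have "(\<Sum>j=0..<n. uj n \<alpha> j * gp i j * (\<alpha> j ^ i' - c * Pj n \<alpha> j * W i'))
       = (\<Sum>j=0..<n. \<alpha> j ^ i' * uj n \<alpha> j) + (\<Sum>t=0..l. \<eta> t * (\<Sum>j=0..<n. \<alpha> j ^ (k+t+i') * uj n \<alpha> j))
         - c * W i' * (\<Sum>j=0..<n. uj n \<alpha> j * Pj n \<alpha> j)
         - c * W i' * (\<Sum>t=0..l. \<eta> t * (\<Sum>j=0..<n. \<alpha> j ^ (k+t) * Pj n \<alpha> j * uj n \<alpha> j))"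
      unfolding pw by (simp add: sum.distrib sum_subtractf sum_distrib_left sum.swap[of _ "{0..l}"])
    also have "(\<Sum>j=0..<n. \<alpha> j ^ i' * uj n \<alpha> j) = 0" using F1[of i'] i' k_ge unfolding N_def by simp
    also have "(\<Sum>t=0..l. \<eta> t * (\<Sum>j=0..<n. \<alpha> j ^ (k+t) * Pj n \<alpha> j * uj n \<alpha> j)) = 0"
      by (rule sum.neutral) (use F2 k_ge kN in auto)
    also have "(\<Sum>t=0..l. \<eta> t * (\<Sum>j=0..<n. \<alpha> j ^ (k+t+i') * uj n \<alpha> j)) = W i'"
    proof (cases "i' < N - (l+1)")
      case True
      have "(\<Sum>t=0..l. \<eta> t * (\<Sum>j=0..<n. \<alpha> j ^ (k+t+i') * uj n \<alpha> j)) = 0"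
      proof (rule sum.neutral, rule ballI)
        fix t assume "t \<in> {0..l}"
        then have "k + t + i' \<le> n - 2" using True kN unfolding N_def by auto
        then show "\<eta> t * (\<Sum>j=0..<n. \<alpha> j ^ (k+t+i') * uj n \<alpha> j) = 0" using F1 by simp
      qed
      then show ?thesis unfolding W_def using True by simp
    next
      case False
      define r where "r = N - i'"
      have r: "1 \<le> r" "r \<le> l + 1" "r \<le> n" using False i' unfolding r_def N_def using kN by auto
      have "(\<Sum>t=0..l. \<eta> t * (\<Sum>j=0..<n. \<alpha> j ^ (k+t+i') * uj n \<alpha> j))
          = (\<Sum>t=0..l. \<eta> t * complete_hom (int t + 1 - int r) n \<alpha>)"
      proof (rule sum.cong)
        fix t assume "t \<in> {0..l}"
        have "k + t + i' = n + t - r" using i' r unfolding r_def N_def using kN by auto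
        then show "\<eta> t * (\<Sum>j=0..<n. \<alpha> j ^ (k+t+i') * uj n \<alpha> j) = \<eta> t * complete_hom (int t + 1 - int r) n \<alpha>"
          using F4[OF r(1) r(3), of t] by simp
      qed simp
      then show ?thesis unfolding W_def Omega_def r_def using False by simp
    qed
    moreover have ccW: "c * (c * W i') = W i'" using cc by (simp add: mult.assoc[symmetric])
    ultimately show ?thesis unfolding F3 by (simp add: algebra_simps)
  qed

  have part2: "G * H\<^sup>T = 0\<^sub>m k N"
  proof (rule eq_matI)
    fix i i' assume i: "i < dim_row (0\<^sub>m k N)" and i': "i' < dim_col (0\<^sub>m k N)"
    have "(G * H\<^sup>T) $$ (i, i') = (\<Sum>j=0..<n. G $$ (i,j) * H $$ (i',j))"
      using i i' Gc Hc by (simp add: scalar_prod_def)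
    also have "\<dots> = (\<Sum>j=0..<n. uj n \<alpha> j * gp i j * (\<alpha> j ^ i' - c * Pj n \<alpha> j * W i'))"
    proof (rule sum.cong)
      fix j assume j: "j \<in> {0..<n}"
      then have "v j \<noteq> 0" using v_nz by auto
      then show "G $$ (i,j) * H $$ (i',j) = uj n \<alpha> j * gp i j * (\<alpha> j ^ i' - c * Pj n \<alpha> j * W i')"
      proof -
        have ii: "i < k" "i' < N" "j < n" using i i' j Gc Hc by auto
        show ?thesis unfolding Gij[OF ii(1,3)] Hij[OF ii(2,3)] using \<open>v j \<noteq> 0\<close> by (simp add: field_simps)
      qed
    qed simp
    also have "\<dots> = 0" using key i i' by simp
    finally show "(G * H\<^sup>T) $$ (i, i') = 0\<^sub>m k N $$ (i, i')" using i i' by simp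
  qed (use Gc Hc in auto)

  define R where "R = mat n N (\<lambda>(j,m). v j * \<alpha> j ^ (n - 1 - m))"
  have Rc: "R \<in> carrier_mat n N" unfolding R_def by simp
  have HR: "(H * R) $$ (i, m) = (\<Sum>j=0..<n. \<alpha> j ^ (i + (n-1-m)) * uj n \<alpha> j)" if i: "i < N" and m: "m < N" for i m
  proof -
    have "(H * R) $$ (i, m) = (\<Sum>j=0..<n. H $$ (i,j) * R $$ (j,m))"
      using i m Hc Rc by (simp add: scalar_prod_def)
    also have "\<dots> = (\<Sum>j=0..<n. \<alpha> j ^ (i + (n-1-m)) * uj n \<alpha> j - c * W i * (\<alpha> j ^ (n-1-m) * Pj n \<alpha> j * uj n \<alpha> j))"
    proof (rule sum.cong)
      fix j assume j: "j \<in> {0..<n}"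
      then have "v j \<noteq> 0" using v_nz by auto
      then show "H $$ (i,j) * R $$ (j,m) = \<alpha> j ^ (i + (n-1-m)) * uj n \<alpha> j - c * W i * (\<alpha> j ^ (n-1-m) * Pj n \<alpha> j * uj n \<alpha> j)"
      proof -
        have ii: "i < N" "j < n" "m < N" using i m j by auto
        have "R $$ (j,m) = v j * \<alpha> j ^ (n - 1 - m)" unfolding R_def using ii by simp
        then show ?thesis unfolding Hij[OF ii(1,2)] using \<open>v j \<noteq> 0\<close> by (simp add: field_simps power_add)
      qed
    qed simp
    also have "\<dots> = (\<Sum>j=0..<n. \<alpha> j ^ (i + (n-1-m)) * uj n \<alpha> j) - c * W i * (\<Sum>j=0..<n. \<alpha> j ^ (n-1-m) * Pj n \<alpha> j * uj n \<alpha> j)"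
      by (simp add: sum_subtractf sum_distrib_left)
    also have "(\<Sum>j=0..<n. \<alpha> j ^ (n-1-m) * Pj n \<alpha> j * uj n \<alpha> j) = 0"
      using F2[of "n-1-m"] m k_ge unfolding N_def by simp
    finally show ?thesis by simp
  qed
  have HRc: "H * R \<in> carrier_mat N N" using Hc Rc by simp
  have "det (H * R) = prod_list (diag_mat (H * R))"
  proof (rule det_lower_triangular[OF _ HRc])
    fix i m assume "i < m" "m < N"
    then show "(H * R) $$ (i, m) = 0" using HR[of i m] F1[of "i + (n-1-m)"] unfolding N_def by simp
  qed
  also have "diag_mat (H * R) = replicate N 1"
    using HRc HR F1' by (auto intro!: nth_equalityI simp: diag_mat_def N_def)
  finally have "det (H * R) \<noteq> 0" by simp
  then have part1: "vec_space.rank N H = N" using vec_space.rank_right_inv[OF Hc Rc] by simp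
  show ?thesis using part1 part2 unfolding H_def G_def N_def by simp
qed

end
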